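(* A finite graph $G$ is isomorphic to $\mathrm{SG}^+(P,W)$ for some finite point sets $P,W$ in the plane such that no two distinct points of $P\cup W$ have equal $x$-coordinate or equal $y$-coordinate, if and only if $G$ is a permutation graph. Moreover, every such square graph is isomorphic to $\mathrm{SG}^+(P',W')$ for some such sets with $|W'|\le 1$.
   Context: For finite point sets $P$ (vertices) and $W$ (witnesses) in $\mathbb{R}^2$ (which may share points), the square graph $\mathrm{SG}^+(P,W)$ is the graph with vertex set $P$ in which distinct $x,y\in P$ are adjacent if and only if there is an axis-aligned square with $x$ and $y$ on its boundary whose interior contains at least one point of $W$. A point $a$ dominates $b$ if $x(a)\ge x(b)$ and $y(a)\ge y(b)$. A graph $G$ is a permutation graph if there exist a finite set $S\subset\mathbb{R}^2$ with pairwise distinct $x$-coordinates and pairwise distinct $y$-coordinates and a bijection $f:V(G)\to S$ such that distinct $u,v$ are adjacent iff one of $f(u),f(v)$ dominates the other (equivalently, $G$ is the comparability graph of a partial order of dimension at most $2$). *)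

theory Defs
  imports Main "HOL.Real"
begin

type_synonym point = "real \<times> real"

definition in_closed_sq :: "real \<Rightarrow> real \<Rightarrow> real \<Rightarrow> point \<Rightarrow> bool" where
  "in_closed_sq a b s p \<longleftrightarrow> a \<le> fst p \<and> fst p \<le> a + s \<and> b \<le> snd p \<and> snd p \<le> b + s"

definition in_open_sq :: "real \<Rightarrow> real \<Rightarrow> real \<Rightarrow> point \<Rightarrow> bool" where
  "in_open_sq a b s p \<longleftrightarrow> a < fst p \<and> fst p < a + s \<and> b < snd p \<and> snd p < b + s"

definition on_sq_boundary :: "real \<Rightarrow> real \<Rightarrow> real \<Rightarrow> point \<Rightarrow> bool" where
  "on_sq_boundary a b s p \<longleftrightarrow> in_closed_sq a b s p \<and> \<not> in_open_sq a b s p"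

definition sg_adj :: "point set \<Rightarrow> point \<Rightarrow> point \<Rightarrow> bool" where
  "sg_adj W x y \<longleftrightarrow> x \<noteq> y \<and>
     (\<exists>a b s. s > 0 \<and> on_sq_boundary a b s x \<and> on_sq_boundary a b s y \<and>
        (\<exists>w\<in>W. in_open_sq a b s w))"

definition dominates :: "point \<Rightarrow> point \<Rightarrow> bool" where
  "dominates a b \<longleftrightarrow> fst a \<ge> fst b \<and> snd a \<ge> snd b"

definition general_pos :: "point set \<Rightarrow> bool" where
  "general_pos S \<longleftrightarrow> (\<forall>p\<in>S. \<forall>q\<in>S. p \<noteq> q \<longrightarrow> fst p \<noteq> fst q \<and> snd p \<noteq> snd q)"

definition finite_simple_graph :: "'a set \<Rightarrow> ('a \<Rightarrow> 'a \<Rightarrow> bool) \<Rightarrow> bool" where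
  "finite_simple_graph V E \<longleftrightarrow> finite V \<and>
     (\<forall>u v. E u v \<longrightarrow> u \<in> V \<and> v \<in> V \<and> u \<noteq> v \<and> E v u)"

definition graph_iso :: "'a set \<Rightarrow> ('a \<Rightarrow> 'a \<Rightarrow> bool) \<Rightarrow> 'b set \<Rightarrow> ('b \<Rightarrow> 'b \<Rightarrow> bool) \<Rightarrow> bool" where
  "graph_iso V E V' E' \<longleftrightarrow>
     (\<exists>f. bij_betw f V V' \<and> (\<forall>u\<in>V. \<forall>v\<in>V. E u v \<longleftrightarrow> E' (f u) (f v)))"

definition permutation_graph :: "'a set \<Rightarrow> ('a \<Rightarrow> 'a \<Rightarrow> bool) \<Rightarrow> bool" where
  "permutation_graph V E \<longleftrightarrow>
     (\<exists>S :: point set. \<exists>f. finite S \<and> general_pos S \<and> bij_betw f V S \<and>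
        (\<forall>u\<in>V. \<forall>v\<in>V. u \<noteq> v \<longrightarrow> (E u v \<longleftrightarrow> dominates (f u) (f v) \<or> dominates (f v) (f u))))"

end

theory Submission
  imports Defs Complex_Main
begin

definition sqok :: "point \<Rightarrow> point \<Rightarrow> point \<Rightarrow> bool" where
 "sqok x y w \<longleftrightarrow> (\<exists>a b s. s > 0 \<and> on_sq_boundary a b s x \<and> on_sq_boundary a b s y \<and> in_open_sq a b s w)"

lemma sg_adj_alt: "sg_adj W x y \<longleftrightarrow> x \<noteq> y \<and> (\<exists>w\<in>W. sqok x y w)"
  unfolding sg_adj_def sqok_def by blast

definition blk :: "point \<Rightarrow> point \<Rightarrow> point \<Rightarrow> bool" where
 "blk x y w \<longleftrightarrow> (fst w < fst x \<longleftrightarrow> fst w < fst y) \<and> (snd w < snd x \<longleftrightarrow> snd w < snd y)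
    \<and> ((fst x < fst y \<longleftrightarrow> snd x < snd y) \<longleftrightarrow> (fst w < fst x \<longleftrightarrow> snd w < snd x))"

lemma between_open:
  assumes "in_closed_sq a c s q" "in_open_sq a c s w"
    and "(fst q < fst p \<and> fst p < fst w) \<or> (fst w < fst p \<and> fst p < fst q)"
    and "(snd q < snd p \<and> snd p < snd w) \<or> (snd w < snd p \<and> snd p < snd q)"
  shows "in_open_sq a c s p"
  using assms unfolding in_closed_sq_def in_open_sq_def by auto

lemma sqok_imp_not_blk:
  assumes "fst x \<noteq> fst y" "snd x \<noteq> snd y" "fst w \<noteq> fst x" "fst w \<noteq> fst y" "snd w \<noteq> snd x" "snd w \<noteq> snd y"
    and "sqok x y w" shows "\<not> blk x y w"
proof
  assume b: "blk x y w"
  from assms(7) obtain a c s where s: "on_sq_boundary a c s x" "on_sq_boundary a c s y" "in_open_sq a c s w"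
    unfolding sqok_def by blast
  have cx: "in_closed_sq a c s x" "\<not> in_open_sq a c s x" and cy: "in_closed_sq a c s y" "\<not> in_open_sq a c s y"
    using s unfolding on_sq_boundary_def by auto
  have "((fst x < fst y \<and> fst y < fst w) \<or> (fst w < fst y \<and> fst y < fst x)) \<and> ((snd x < snd y \<and> snd y < snd w) \<or> (snd w < snd y \<and> snd y < snd x))
     \<or> ((fst y < fst x \<and> fst x < fst w) \<or> (fst w < fst x \<and> fst x < fst y)) \<and> ((snd y < snd x \<and> snd x < snd w) \<or> (snd w < snd x \<and> snd x < snd y))"
    using b assms(1-6) unfolding blk_def by argo
  then show False using between_open[OF cx(1) s(3), of y] between_open[OF cy(1) s(3), of x] cx(2) cy(2) by blast
qed

lemma big_s: "\<exists>s::real. s > 0 \<and> s > A \<and> s > B \<and> s > C \<and> s > D"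
  by (rule exI[of _ "max (max A B) (max C D) + max 0 0 + 1 + \<bar>A\<bar> + \<bar>B\<bar> + \<bar>C\<bar> + \<bar>D\<bar>"]) auto

lemma R1: assumes "x1 < y1" "x2 < y2" "w1 < y1" "x2 < w2" shows "sqok (x1,x2) (y1,y2) (w1,w2)"
proof -
  obtain s where s: "s > 0" "s > y1 - x1" "s > y2 - x2" "s > y1 - w1" "s > w2 - x2" using big_s by blast
  show ?thesis unfolding sqok_def on_sq_boundary_def in_closed_sq_def in_open_sq_def
    apply (rule exI[of _ "y1 - s"], rule exI[of _ x2], rule exI[of _ s]) using s assms by auto
qed

lemma R2: assumes "x1 < y1" "x2 < y2" "x1 < w1" "w2 < y2" shows "sqok (x1,x2) (y1,y2) (w1,w2)"
proof -
  obtain s where s: "s > 0" "s > y1 - x1" "s > y2 - x2" "s > w1 - x1" "s > y2 - w2" using big_s by blast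
  show ?thesis unfolding sqok_def on_sq_boundary_def in_closed_sq_def in_open_sq_def
    apply (rule exI[of _ "x1"], rule exI[of _ "y2 - s"], rule exI[of _ s]) using s assms by auto
qed

lemma R3: assumes "x1 < y1" "y2 < x2" "w1 < y1" "w2 < x2" shows "sqok (x1,x2) (y1,y2) (w1,w2)"
proof -
  obtain s where s: "s > 0" "s > y1 - x1" "s > x2 - y2" "s > y1 - w1" "s > x2 - w2" using big_s by blast
  show ?thesis unfolding sqok_def on_sq_boundary_def in_closed_sq_def in_open_sq_def
    apply (rule exI[of _ "y1 - s"], rule exI[of _ "x2 - s"], rule exI[of _ s]) using s assms by auto
qed

lemma R4: assumes "x1 < y1" "y2 < x2" "x1 < w1" "y2 < w2" shows "sqok (x1,x2) (y1,y2) (w1,w2)"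
proof -
  obtain s where s: "s > 0" "s > y1 - x1" "s > x2 - y2" "s > w1 - x1" "s > w2 - y2" using big_s by blast
  show ?thesis unfolding sqok_def on_sq_boundary_def in_closed_sq_def in_open_sq_def
    apply (rule exI[of _ "x1"], rule exI[of _ "y2"], rule exI[of _ s]) using s assms by auto
qed

lemma cov1: fixes x1 x2 y1 y2 w1 w2 :: real
  assumes "x1<y1" "x2<y2" "w1\<noteq>x1" "w1\<noteq>y1" "w2\<noteq>x2" "w2\<noteq>y2"
   "\<not>((w1 < x1 \<longleftrightarrow> w1 < y1) \<and> (w2 < x2 \<longleftrightarrow> w2 < y2) \<and> ((x1 < y1 \<longleftrightarrow> x2 < y2) \<longleftrightarrow> (w1 < x1 \<longleftrightarrow> w2 < x2)))"
  shows "(w1<y1 \<and> x2<w2) \<or> (x1<w1 \<and> w2<y2)"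
proof -
  have a: "(x1 < y1 \<longleftrightarrow> x2 < y2) = True" using assms by simp
  show ?thesis using assms(7)[unfolded a] assms(1-6)
    by (cases "w1 < x1"; cases "w2 < x2"; cases "w1 < y1"; cases "w2 < y2"; simp; linarith)
qed
lemma cov2: fixes x1 x2 y1 y2 w1 w2 :: real
  assumes "x1<y1" "y2<x2" "w1\<noteq>x1" "w1\<noteq>y1" "w2\<noteq>x2" "w2\<noteq>y2"
   "\<not>((w1 < x1 \<longleftrightarrow> w1 < y1) \<and> (w2 < x2 \<longleftrightarrow> w2 < y2) \<and> ((x1 < y1 \<longleftrightarrow> x2 < y2) \<longleftrightarrow> (w1 < x1 \<longleftrightarrow> w2 < x2)))"
  shows "(w1<y1 \<and> w2<x2) \<or> (x1<w1 \<and> y2<w2)"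
proof -
  have a: "(x1 < y1 \<longleftrightarrow> x2 < y2) = False" using assms by simp
  show ?thesis using assms(7)[unfolded a] assms(1-6)
    by (cases "w1 < x1"; cases "w2 < x2"; cases "w1 < y1"; cases "w2 < y2"; simp; linarith)
qed
lemma not_blk_imp_sqok_lt:
  assumes "fst x < fst y" "snd x \<noteq> snd y" "fst w \<noteq> fst x" "fst w \<noteq> fst y" "snd w \<noteq> snd x" "snd w \<noteq> snd y"
    and "\<not> blk x y w" shows "sqok x y w"
proof -
  obtain x1 x2 y1 y2 w1 w2 where xyw: "x = (x1,x2)" "y = (y1,y2)" "w = (w1,w2)" by (cases x, cases y, cases w) auto
  have h: "x1 < y1" "x2 \<noteq> y2" "w1 \<noteq> x1" "w1 \<noteq> y1" "w2 \<noteq> x2" "w2 \<noteq> y2" using assms(1-6) xyw by auto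
  have nb: "\<not> ((w1 < x1 \<longleftrightarrow> w1 < y1) \<and> (w2 < x2 \<longleftrightarrow> w2 < y2) \<and> ((x1 < y1 \<longleftrightarrow> x2 < y2) \<longleftrightarrow> (w1 < x1 \<longleftrightarrow> w2 < x2)))"
    using assms(7) unfolding xyw blk_def fst_conv snd_conv .
  have "sqok (x1,x2) (y1,y2) (w1,w2)"
  proof (cases "x2 < y2")
    case True
    have "(w1 < y1 \<and> x2 < w2) \<or> (x1 < w1 \<and> w2 < y2)"
      using cov1[OF h(1) True h(3-6) nb] .
    then show ?thesis using R1[OF h(1) True] R2[OF h(1) True] by blast
  next
    case False
    then have F: "y2 < x2" using h(2) by linarith
    have "(w1 < y1 \<and> w2 < x2) \<or> (x1 < w1 \<and> y2 < w2)"
      using cov2[OF h(1) F h(3-6) nb] .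
    then show ?thesis using R3[OF h(1) F] R4[OF h(1) F] by blast
  qed
  then show ?thesis using xyw by simp
qed

lemma sqok_sym: "sqok x y w \<longleftrightarrow> sqok y x w" unfolding sqok_def by blast

lemma blk_sym: assumes "fst x \<noteq> fst y" "snd x \<noteq> snd y" shows "blk x y w \<longleftrightarrow> blk y x w"
  using assms unfolding blk_def by auto

lemma sqok_iff:
  assumes "fst x \<noteq> fst y" "snd x \<noteq> snd y" "fst w \<noteq> fst x" "fst w \<noteq> fst y" "snd w \<noteq> snd x" "snd w \<noteq> snd y"
  shows "sqok x y w \<longleftrightarrow> \<not> blk x y w"
proof (cases "fst x < fst y")
  case True then show ?thesis using sqok_imp_not_blk not_blk_imp_sqok_lt assms by blast
next
  case False
  then have "fst y < fst x" using assms by auto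
  then show ?thesis using sqok_imp_not_blk not_blk_imp_sqok_lt[of y x w] assms sqok_sym blk_sym by metis
qed

lemma sqok_self: "\<not> sqok x y x" "\<not> sqok x y y"
  unfolding sqok_def on_sq_boundary_def by auto

definition rx :: "point set \<Rightarrow> point \<Rightarrow> nat" where "rx W p = card {w\<in>W. fst w < fst p}"
definition ry :: "point set \<Rightarrow> point \<Rightarrow> nat" where "ry W p = card {w\<in>W. snd w < snd p}"

lemma rx_lt: assumes "finite W" "w \<in> W" shows "fst w < fst p \<longleftrightarrow> rx W w < rx W p"
proof
  assume "fst w < fst p"
  then have "{v\<in>W. fst v < fst w} \<subset> {v\<in>W. fst v < fst p}" using assms(2) by auto
  then show "rx W w < rx W p" unfolding rx_def using assms(1) by (simp add: psubset_card_mono)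
next
  assume "rx W w < rx W p"
  show "fst w < fst p"
  proof (rule ccontr)
    assume "\<not> fst w < fst p"
    then have "{v\<in>W. fst v < fst p} \<subseteq> {v\<in>W. fst v < fst w}" by auto
    then have "rx W p \<le> rx W w" unfolding rx_def using assms(1) by (simp add: card_mono)
    then show False using \<open>rx W w < rx W p\<close> by simp
  qed
qed

lemma ry_lt: assumes "finite W" "w \<in> W" shows "snd w < snd p \<longleftrightarrow> ry W w < ry W p"
proof
  assume "snd w < snd p"
  then have "{v\<in>W. snd v < snd w} \<subset> {v\<in>W. snd v < snd p}" using assms(2) by auto
  then show "ry W w < ry W p" unfolding ry_def using assms(1) by (simp add: psubset_card_mono)
next
  assume "ry W w < ry W p"
  show "snd w < snd p"
  proof (rule ccontr)
    assume "\<not> snd w < snd p"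
    then have "{v\<in>W. snd v < snd p} \<subseteq> {v\<in>W. snd v < snd w}" by auto
    then have "ry W p \<le> ry W w" unfolding ry_def using assms(1) by (simp add: card_mono)
    then show False using \<open>ry W w < ry W p\<close> by simp
  qed
qed

lemma rx_le: "finite W \<Longrightarrow> rx W p \<le> card W"
  unfolding rx_def by (rule card_mono) auto
lemma ry_le: "finite W \<Longrightarrow> ry W p \<le> card W"
  unfolding ry_def by (rule card_mono) auto

lemma rx_less: assumes "finite W" "w \<in> W" shows "rx W w < card W"
proof -
  have "{v\<in>W. fst v < fst w} \<subset> W" using assms(2) by auto
  then show ?thesis unfolding rx_def using assms(1) by (simp add: psubset_card_mono)
qed
lemma ry_less: assumes "finite W" "w \<in> W" shows "ry W w < card W"
proof -
  have "{v\<in>W. snd v < snd w} \<subset> W" using assms(2) by auto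
  then show ?thesis unfolding ry_def using assms(1) by (simp add: psubset_card_mono)
qed

definition gpW :: "point set \<Rightarrow> bool" where
  "gpW W \<longleftrightarrow> (\<forall>p\<in>W. \<forall>q\<in>W. p \<noteq> q \<longrightarrow> fst p \<noteq> fst q \<and> snd p \<noteq> snd q)"

lemma rx_inj: assumes "finite W" "gpW W" "w \<in> W" "v \<in> W" "rx W w = rx W v" shows "w = v"
proof (rule ccontr)
  assume "w \<noteq> v"
  then have "fst w \<noteq> fst v" using assms(2-4) unfolding gpW_def by blast
  then have "fst w < fst v \<or> fst v < fst w" by linarith
  then show False using rx_lt[OF assms(1) assms(3), of v] rx_lt[OF assms(1) assms(4), of w] assms(5) by auto
qed
lemma ry_inj: assumes "finite W" "gpW W" "w \<in> W" "v \<in> W" "ry W w = ry W v" shows "w = v"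
proof (rule ccontr)
  assume "w \<noteq> v"
  then have "snd w \<noteq> snd v" using assms(2-4) unfolding gpW_def by blast
  then have "snd w < snd v \<or> snd v < snd w" by linarith
  then show False using ry_lt[OF assms(1) assms(3), of v] ry_lt[OF assms(1) assms(4), of w] assms(5) by auto
qed

lemma rx_surj: assumes "finite W" "gpW W" "k < card W" shows "\<exists>w\<in>W. rx W w = k"
proof -
  have inj: "inj_on (rx W) W" using rx_inj[OF assms(1,2)] unfolding inj_on_def by blast
  have sub: "rx W ` W \<subseteq> {..<card W}" using rx_less[OF assms(1)] by auto
  have "card (rx W ` W) = card {..<card W}" using card_image[OF inj] by simp
  then have "rx W ` W = {..<card W}" using card_subset_eq[OF _ sub] by simp
  then show ?thesis using assms(3) by (metis imageE lessThan_iff)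
qed
lemma ry_surj: assumes "finite W" "gpW W" "k < card W" shows "\<exists>w\<in>W. ry W w = k"
proof -
  have inj: "inj_on (ry W) W" using ry_inj[OF assms(1,2)] unfolding inj_on_def by blast
  have sub: "ry W ` W \<subseteq> {..<card W}" using ry_less[OF assms(1)] by auto
  have "card (ry W ` W) = card {..<card W}" using card_image[OF inj] by simp
  then have "ry W ` W = {..<card W}" using card_subset_eq[OF _ sub] by simp
  then show ?thesis using assms(3) by (metis imageE lessThan_iff)
qed

definition cmp :: "point \<Rightarrow> point \<Rightarrow> bool" where "cmp x y \<longleftrightarrow> (fst x < fst y \<longleftrightarrow> snd x < snd y)"

definition blkR :: "point set \<Rightarrow> point \<Rightarrow> point \<Rightarrow> point \<Rightarrow> bool" where
 "blkR W x y w \<longleftrightarrow> (rx W w < rx W x \<longleftrightarrow> rx W w < rx W y) \<and> (ry W w < ry W x \<longleftrightarrow> ry W w < ry W y)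
    \<and> (cmp x y \<longleftrightarrow> (rx W w < rx W x \<longleftrightarrow> ry W w < ry W x))"

lemma adj_char:
  assumes "finite W" "general_pos (P \<union> W)" "x \<in> P" "y \<in> P" "x \<noteq> y"
  shows "sg_adj W x y \<longleftrightarrow> (\<exists>w\<in>W. w \<noteq> x \<and> w \<noteq> y \<and> \<not> blkR W x y w)"
proof -
  have gp: "\<And>p q. p \<in> P \<union> W \<Longrightarrow> q \<in> P \<union> W \<Longrightarrow> p \<noteq> q \<Longrightarrow> fst p \<noteq> fst q \<and> snd p \<noteq> snd q"
    using assms(2) unfolding general_pos_def by blast
  have "sqok x y w \<longleftrightarrow> w \<noteq> x \<and> w \<noteq> y \<and> \<not> blkR W x y w" if w: "w \<in> W" for w
  proof (cases "w = x \<or> w = y")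
    case True then show ?thesis using sqok_self(1)[of x y] sqok_self(2)[of x y] by blast
  next
    case False
    have d: "fst x \<noteq> fst y" "snd x \<noteq> snd y" "fst w \<noteq> fst x" "fst w \<noteq> fst y" "snd w \<noteq> snd x" "snd w \<noteq> snd y"
      using gp[of x y] gp[of w x] gp[of w y] assms(3-5) w False by auto
    have "blk x y w \<longleftrightarrow> blkR W x y w"
      unfolding blk_def blkR_def cmp_def using rx_lt[OF assms(1) w] ry_lt[OF assms(1) w] by simp
    then show ?thesis using sqok_iff[OF d] False by simp
  qed
  then show ?thesis using sg_adj_alt[of W x y] assms(5) by auto
qed

definition tD :: "point set \<Rightarrow> nat \<Rightarrow> nat \<Rightarrow> bool" where
  "tD W i j \<longleftrightarrow> (\<forall>w\<in>W. (rx W w < i \<longleftrightarrow> ry W w < j))"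
definition tA :: "point set \<Rightarrow> nat \<Rightarrow> nat \<Rightarrow> bool" where
  "tA W i j \<longleftrightarrow> (\<forall>w\<in>W. (rx W w < i \<longleftrightarrow> \<not> ry W w < j))"

lemma tD_tA_excl: "W \<noteq> {} \<Longrightarrow> tD W i j \<Longrightarrow> tA W i j \<Longrightarrow> False"
  unfolding tD_def tA_def by blast

definition blockpt :: "int \<Rightarrow> real \<Rightarrow> real \<Rightarrow> point" where
  "blockpt c a b = (8 * of_int c + arctan a, 8 * of_int c + arctan b)"
definition shpos :: "bool \<Rightarrow> int \<Rightarrow> point" where
  "shpos e b = (if e then (8 * of_int b - 3, 8 * of_int b + 11) else (8 * of_int b + 11, 8 * of_int b - 3))"
definition scmp :: "point \<Rightarrow> point \<Rightarrow> bool" where "scmp p q \<longleftrightarrow> (fst p < fst q \<longleftrightarrow> snd p < snd q)"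
definition sdist :: "point \<Rightarrow> point \<Rightarrow> bool" where "sdist p q \<longleftrightarrow> fst p \<noteq> fst q \<and> snd p \<noteq> snd q"

lemma atn: "\<bar>arctan x\<bar> < 2"
  using arctan_bounded[of x] pi_less_4 by linarith

lemma L1: assumes "c \<noteq> c'" shows "sdist (blockpt c a b) (blockpt c' a' b') \<and> scmp (blockpt c a b) (blockpt c' a' b')"
proof -
  have A: "\<bar>arctan a\<bar> < 2" "\<bar>arctan b\<bar> < 2" "\<bar>arctan a'\<bar> < 2" "\<bar>arctan b'\<bar> < 2" using atn by auto
  have "c + 1 \<le> c' \<or> c' + 1 \<le> c" using assms by linarith
  then have "(of_int c + 1 \<le> (of_int c' :: real)) \<or> (of_int c' + 1 \<le> (of_int c :: real))"
    by (metis of_int_add of_int_le_iff of_int_1)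
  then show ?thesis unfolding blockpt_def sdist_def scmp_def using A by auto
qed

lemma L1s: "scmp (blockpt c a b) (blockpt c a' b') \<longleftrightarrow> (a < a' \<longleftrightarrow> b < b')"
  "sdist (blockpt c a b) (blockpt c a' b') \<longleftrightarrow> a \<noteq> a' \<and> b \<noteq> b'"
  unfolding blockpt_def sdist_def scmp_def by (auto simp: arctan_less_iff arctan_eq_iff)

lemma shpos_simps: "fst (shpos e b) = (if e then 8 * of_int b - 3 else 8 * of_int b + 11)"
  "snd (shpos e b) = (if e then 8 * of_int b + 11 else 8 * of_int b - 3)"
  unfolding shpos_def by auto
lemma blockpt_simps: "fst (blockpt c a b) = 8 * of_int c + arctan a" "snd (blockpt c a b) = 8 * of_int c + arctan b"
  unfolding blockpt_def by auto

lemma L2: "sdist (blockpt c a b) (shpos e b0) \<and> (scmp (blockpt c a b) (shpos e b0) \<longleftrightarrow> \<not> (c = b0 \<or> c = b0 + 1))"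
proof -
  let ?p = "blockpt c a b" and ?q = "shpos e b0"
  have A: "\<bar>arctan a\<bar> < 2" "\<bar>arctan b\<bar> < 2" using atn by auto
  consider "c \<le> b0 - 1" | "c = b0" | "c = b0 + 1" | "c \<ge> b0 + 2" by linarith
  then show ?thesis
  proof cases
    case 1 then have "(of_int c :: real) \<le> of_int b0 - 1" by (metis of_int_diff of_int_le_iff of_int_1)
    then have f: "fst ?p < fst ?q" "snd ?p < snd ?q" unfolding blockpt_simps shpos_simps using A by auto
    show ?thesis using f 1 unfolding sdist_def scmp_def by auto
  next
    case 2
    then have f: "(fst ?p < fst ?q \<longleftrightarrow> \<not> e)" "(snd ?p < snd ?q \<longleftrightarrow> e)" "fst ?p \<noteq> fst ?q" "snd ?p \<noteq> snd ?q"
      unfolding blockpt_simps shpos_simps using A by auto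
    show ?thesis using f 2 unfolding sdist_def scmp_def by auto
  next
    case 3
    then have "(of_int c :: real) = of_int b0 + 1" by simp
    then have f: "(fst ?p < fst ?q \<longleftrightarrow> \<not> e)" "(snd ?p < snd ?q \<longleftrightarrow> e)" "fst ?p \<noteq> fst ?q" "snd ?p \<noteq> snd ?q"
      unfolding blockpt_simps shpos_simps using A by auto
    show ?thesis using f 3 unfolding sdist_def scmp_def by auto
  next
    case 4 then have "(of_int c :: real) \<ge> of_int b0 + 2" by (metis of_int_add of_int_le_iff of_int_numeral)
    then have f: "fst ?q < fst ?p" "snd ?q < snd ?p" unfolding blockpt_simps shpos_simps using A by auto
    show ?thesis using f 4 unfolding sdist_def scmp_def by auto
  qed
qed

lemma shpos_int: "fst (shpos e b) = of_int (if e then 8 * b - 3 else 8 * b + 11)"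
  "snd (shpos e b) = of_int (if e then 8 * b + 11 else 8 * b - 3)"
  unfolding shpos_def by auto

lemma L3: assumes "(e, b) \<noteq> (e', b')"
  shows "sdist (shpos e b) (shpos e' b') \<and> (scmp (shpos e b) (shpos e' b') \<longleftrightarrow> e = e' \<or> b' \<ge> b + 2 \<or> b \<ge> b' + 2)"
  using assms unfolding sdist_def scmp_def shpos_int of_int_less_iff of_int_eq_iff
  by (cases e; cases e') (simp_all; presburger)+

lemma L4: assumes "0 \<le> c" "c \<le> K" "R \<ge> 8 * of_int K + 2"
  shows "sdist (-10, R) (blockpt c a b) \<and> \<not> scmp (-10, R) (blockpt c a b)"
proof -
  have A: "\<bar>arctan a\<bar> < 2" "\<bar>arctan b\<bar> < 2" using atn by auto
  have "(0::real) \<le> of_int c" "(of_int c::real) \<le> of_int K" using assms by auto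
  then have f: "fst (-10, R) < fst (blockpt c a b)" "snd (blockpt c a b) < snd (-10, R)"
    unfolding blockpt_simps using A assms(3) by auto
  then show ?thesis unfolding sdist_def scmp_def by auto
qed

definition OFF :: "nat \<Rightarrow> int" where "OFF N = (2 * int N + 1) * (int N + 3) + 4"
definition Bk :: "point set \<Rightarrow> nat \<Rightarrow> nat \<Rightarrow> int" where
 "Bk W i j = (if tA W i j then OFF (card W) + (int i + int j) * (int (card W) + 3) + int i
              else (int i - int j + int (card W)) * (int (card W) + 3) + int i)"

lemma divmod_uniq: fixes a a' r r' M :: int
  assumes "a * M + r = a' * M + r'" "0 \<le> r" "r < M" "0 \<le> r'" "r' < M"
  shows "a = a' \<and> r = r'"
proof -
  have "(a * M + r) mod M = r" using assms(2,3) by simp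
  moreover have "(a' * M + r') mod M = r'" using assms(4,5) by simp
  ultimately have rr: "r = r'" using assms(1) by simp
  then have "a * M = a' * M" using assms(1) by simp
  then have "a = a'" using assms(3,2) by simp
  then show ?thesis using rr by simp
qed

lemma Bk_bounds:
  assumes "i \<le> N" "j \<le> N" "N = card W"
  shows "0 \<le> Bk W i j" "Bk W i j + 2 \<le> 2 * OFF N"
    "\<not> tA W i j \<Longrightarrow> Bk W i j < OFF N" "tA W i j \<Longrightarrow> OFF N \<le> Bk W i j"
proof -
  let ?M = "int N + 3"
  have a0: "0 \<le> int i - int j + int N" "int i - int j + int N \<le> 2 * int N" using assms by auto
  have b0: "0 \<le> int i + int j" "int i + int j \<le> 2 * int N" using assms by auto
  have m0: "0 \<le> (int i - int j + int N) * ?M" using a0 by simp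
  have m1: "(int i - int j + int N) * ?M \<le> (2 * int N) * ?M" using a0 by (intro mult_right_mono) auto
  have m2: "0 \<le> (int i + int j) * ?M" using b0 by simp
  have m3: "(int i + int j) * ?M \<le> (2 * int N) * ?M" using b0 by (intro mult_right_mono) auto
  have off: "OFF N = (2 * int N) * ?M + ?M + 4" unfolding OFF_def by (simp add: algebra_simps)
  have iN: "int i \<le> int N" using assms by simp
  have Bt: "tA W i j \<Longrightarrow> Bk W i j = OFF N + (int i + int j) * ?M + int i"
    and Bf: "\<not> tA W i j \<Longrightarrow> Bk W i j = (int i - int j + int N) * ?M + int i"
    unfolding Bk_def assms(3) by auto
  have NN: "0 \<le> int N" "0 \<le> int i" by simp_all
  have m4: "0 \<le> 2 * int N * ?M" by simp
  show "0 \<le> Bk W i j"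
  proof (cases "tA W i j")
    case True show ?thesis using Bt[OF True] m2 m4 off NN by linarith
  next
    case False show ?thesis using Bf[OF False] m0 NN by linarith
  qed
  show "Bk W i j + 2 \<le> 2 * OFF N"
  proof (cases "tA W i j")
    case True show ?thesis using Bt[OF True] m3 m4 off iN NN by linarith
  next
    case False show ?thesis using Bf[OF False] m1 m4 off iN NN by linarith
  qed
  show "\<not> tA W i j \<Longrightarrow> Bk W i j < OFF N"
  proof -
    assume F: "\<not> tA W i j" show ?thesis using Bf[OF F] m1 off iN NN by linarith
  qed
  show "tA W i j \<Longrightarrow> OFF N \<le> Bk W i j"
  proof -
    assume T: "tA W i j" show ?thesis using Bt[OF T] m2 NN by linarith
  qed
qed

lemma Bk_inj:
  assumes "i \<le> card W" "j \<le> card W" "i' \<le> card W" "j' \<le> card W" "Bk W i j = Bk W i' j'"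
  shows "i = i' \<and> j = j'"
proof -
  let ?N = "card W"
  let ?M = "int ?N + 3"
  have r: "0 \<le> int i" "int i < ?M" "0 \<le> int i'" "int i' < ?M" using assms by auto
  show ?thesis
  proof (cases "tA W i j"; cases "tA W i' j'")
    assume a: "tA W i j" "tA W i' j'"
    then have "(int i + int j) * ?M + int i = (int i' + int j') * ?M + int i'"
      using assms(5) unfolding Bk_def by simp
    from divmod_uniq[OF this r] show ?thesis by simp
  next
    assume a: "\<not> tA W i j" "\<not> tA W i' j'"
    then have "(int i - int j + int ?N) * ?M + int i = (int i' - int j' + int ?N) * ?M + int i'"
      using assms(5) unfolding Bk_def by simp
    from divmod_uniq[OF this r] show ?thesis by simp
  next
    assume a: "tA W i j" "\<not> tA W i' j'"
    then show ?thesis using Bk_bounds[OF assms(1,2) refl] Bk_bounds[OF assms(3,4) refl] assms(5) by auto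
  next
    assume a: "\<not> tA W i j" "tA W i' j'"
    then show ?thesis using Bk_bounds[OF assms(1,2) refl] Bk_bounds[OF assms(3,4) refl] assms(5) by auto
  qed
qed

lemma Bk_D: "\<not> tA W i j \<Longrightarrow> \<not> tA W (Suc i) (Suc j) \<Longrightarrow> Bk W (Suc i) (Suc j) = Bk W i j + 1"
  unfolding Bk_def by simp
lemma Bk_A: "tA W i (Suc j) \<Longrightarrow> tA W (Suc i) j \<Longrightarrow> Bk W (Suc i) j = Bk W i (Suc j) + 1"
  unfolding Bk_def by (simp add: algebra_simps)

definition chainR :: "point set \<Rightarrow> point \<Rightarrow> point \<Rightarrow> bool" where
  "chainR W s t \<longleftrightarrow> (rx W t = Suc (rx W s) \<and> ry W t = Suc (ry W s) \<and> tD W (rx W s) (ry W s))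
     \<or> (rx W t = Suc (rx W s) \<and> ry W s = Suc (ry W t) \<and> tA W (rx W s) (Suc (ry W s)))"

locale SG = fixes P W :: "point set" assumes finW: "finite W" and gp: "general_pos (P \<union> W)"
begin

lemma gpd: "p \<in> P \<union> W \<Longrightarrow> q \<in> P \<union> W \<Longrightarrow> p \<noteq> q \<Longrightarrow> fst p \<noteq> fst q \<and> snd p \<noteq> snd q"
  using gp unfolding general_pos_def by blast

lemma gpW: "gpW W" unfolding gpW_def using gpd by blast

lemma rk_neq: "w \<in> W \<Longrightarrow> s \<in> W \<Longrightarrow> w \<noteq> s \<Longrightarrow> rx W w \<noteq> rx W s \<and> ry W w \<noteq> ry W s"
  using rx_inj[OF finW gpW] ry_inj[OF finW gpW] by blast

lemma cmp_rank: "s \<in> W \<Longrightarrow> cmp s v \<longleftrightarrow> (rx W s < rx W v \<longleftrightarrow> ry W s < ry W v)"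
  unfolding cmp_def using rx_lt[OF finW] ry_lt[OF finW] by blast

lemma exx: "a < b \<Longrightarrow> b \<le> card W \<Longrightarrow> \<exists>w\<in>W. rx W w = a"
  using rx_surj[OF finW gpW, of a] by simp
lemma exy: "a < b \<Longrightarrow> b \<le> card W \<Longrightarrow> \<exists>w\<in>W. ry W w = a"
  using ry_surj[OF finW gpW, of a] by simp

lemma tDswap: "s \<in> W \<Longrightarrow> tD W (rx W s) (ry W s) \<longleftrightarrow> tD W (Suc (rx W s)) (Suc (ry W s))"
  unfolding tD_def using rk_neq by (metis less_Suc_eq lessI less_irrefl)

lemma tAswap: "s \<in> W \<Longrightarrow> tA W (rx W s) (Suc (ry W s)) \<longleftrightarrow> tA W (Suc (rx W s)) (ry W s)"
  unfolding tA_def using rk_neq by (metis less_Suc_eq lessI less_irrefl)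

lemma excl2: "s \<in> W \<Longrightarrow> W \<noteq> {s} \<Longrightarrow> tD W (rx W s) (ry W s) \<Longrightarrow> tA W (rx W s) (Suc (ry W s)) \<Longrightarrow> False"
proof -
  assume s: "s \<in> W" "W \<noteq> {s}" and d: "tD W (rx W s) (ry W s)" and a: "tA W (rx W s) (Suc (ry W s))"
  obtain w where w: "w \<in> W" "w \<noteq> s" using s by blast
  have "ry W w \<noteq> ry W s" using rk_neq[OF w(1) s(1) w(2)] by simp
  then show False using d a w(1) unfolding tD_def tA_def using less_Suc_eq by blast
qed

lemma blkR_rank: "s \<in> W \<Longrightarrow> blkR W s v w \<longleftrightarrow> (rx W w < rx W s \<longleftrightarrow> rx W w < rx W v) \<and> (ry W w < ry W s \<longleftrightarrow> ry W w < ry W v)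
   \<and> ((rx W s < rx W v \<longleftrightarrow> ry W s < ry W v) \<longleftrightarrow> (rx W w < rx W s \<longleftrightarrow> ry W w < ry W s))"
  unfolding blkR_def using cmp_rank by simp

lemma nonadj_B:
  assumes s: "s \<in> W" and v: "v \<notin> W"
    and i: "i = rx W s" "j = ry W s" "iv = rx W v" "jv = ry W v"
    and nb: "\<forall>w\<in>W. w \<noteq> s \<longrightarrow> blkR W s v w"
  shows "(tD W i j \<and> ((iv = i \<and> jv = j) \<or> (iv = Suc i \<and> jv = Suc j))) \<or>
         (tA W i (Suc j) \<and> ((iv = i \<and> jv = Suc j) \<or> (iv = Suc i \<and> jv = j)))"
proof -
  have B: "\<And>w. w \<in> W \<Longrightarrow> w \<noteq> s \<Longrightarrow> (rx W w < i \<longleftrightarrow> rx W w < iv) \<and> (ry W w < j \<longleftrightarrow> ry W w < jv)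
     \<and> ((i < iv \<longleftrightarrow> j < jv) \<longleftrightarrow> (rx W w < i \<longleftrightarrow> ry W w < j))"
    using nb blkR_rank[OF s] i by simp
  have iN: "i < card W" "j < card W" using rx_less[OF finW s] ry_less[OF finW s] i by auto
  have vN: "iv \<le> card W" "jv \<le> card W" using rx_le[OF finW] ry_le[OF finW] i by auto
  have iv1: "iv \<le> Suc i"
  proof (rule ccontr)
    assume "\<not> iv \<le> Suc i"
    then obtain w where w: "w \<in> W" "rx W w = Suc i" using exx[of "Suc i" iv] vN by auto
    then have "w \<noteq> s" using i by auto
    then show False using B[OF w(1)] w(2) \<open>\<not> iv \<le> Suc i\<close> by auto
  qed
  have iv2: "i \<le> iv"
  proof (rule ccontr)
    assume "\<not> i \<le> iv"
    then obtain w where w: "w \<in> W" "rx W w = iv" using exx[of iv i] iN by auto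
    then have "w \<noteq> s" using i \<open>\<not> i \<le> iv\<close> by auto
    then show False using B[OF w(1)] w(2) \<open>\<not> i \<le> iv\<close> by auto
  qed
  have jv1: "jv \<le> Suc j"
  proof (rule ccontr)
    assume "\<not> jv \<le> Suc j"
    then obtain w where w: "w \<in> W" "ry W w = Suc j" using exy[of "Suc j" jv] vN by auto
    then have "w \<noteq> s" using i by auto
    then show False using B[OF w(1)] w(2) \<open>\<not> jv \<le> Suc j\<close> by auto
  qed
  have jv2: "j \<le> jv"
  proof (rule ccontr)
    assume "\<not> j \<le> jv"
    then obtain w where w: "w \<in> W" "ry W w = jv" using exy[of jv j] iN by auto
    then have "w \<noteq> s" using i \<open>\<not> j \<le> jv\<close> by auto
    then show False using B[OF w(1)] w(2) \<open>\<not> j \<le> jv\<close> by auto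
  qed
  have ne: "\<And>w. w \<in> W \<Longrightarrow> w \<noteq> s \<Longrightarrow> rx W w \<noteq> i \<and> ry W w \<noteq> j" using rk_neq s i by blast
  have C: "\<And>w. w \<in> W \<Longrightarrow> w \<noteq> s \<Longrightarrow> ((i < iv \<longleftrightarrow> j < jv) \<longleftrightarrow> (rx W w < i \<longleftrightarrow> ry W w < j))" using B by blast
  have ws: "rx W s = i" "ry W s = j" using i by auto
  consider "iv = i" "jv = j" | "iv = Suc i" "jv = Suc j" | "iv = i" "jv = Suc j" | "iv = Suc i" "jv = j"
    using iv1 iv2 jv1 jv2 by linarith
  then show ?thesis
  proof cases
    case 1
    have "tD W i j" unfolding tD_def
    proof
      fix w assume w: "w \<in> W"
      show "rx W w < i \<longleftrightarrow> ry W w < j"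
        using C[OF w] 1 ws by (cases "w = s") auto
    qed
    then show ?thesis using 1 by simp
  next
    case 2
    have "tD W i j" unfolding tD_def
    proof
      fix w assume w: "w \<in> W"
      show "rx W w < i \<longleftrightarrow> ry W w < j"
        using C[OF w] 2 ws by (cases "w = s") auto
    qed
    then show ?thesis using 2 by simp
  next
    case 3
    have "tA W i (Suc j)" unfolding tA_def
    proof
      fix w assume w: "w \<in> W"
      show "rx W w < i \<longleftrightarrow> \<not> ry W w < Suc j"
      proof (cases "w = s")
        case True then show ?thesis using ws by simp
      next
        case False then show ?thesis using C[OF w False] ne[OF w False] 3 by (auto simp: less_Suc_eq)
      qed
    qed
    then show ?thesis using 3 by simp
  next
    case 4
    have "tA W i (Suc j)" unfolding tA_def
    proof
      fix w assume w: "w \<in> W"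
      show "rx W w < i \<longleftrightarrow> \<not> ry W w < Suc j"
      proof (cases "w = s")
        case True then show ?thesis using ws by simp
      next
        case False then show ?thesis using C[OF w False] ne[OF w False] 4 by (auto simp: less_Suc_eq)
      qed
    qed
    then show ?thesis using 4 by simp
  qed
qed

lemma adj_B_of_cond:
  assumes s: "s \<in> W" and v: "v \<notin> W"
    and i: "i = rx W s" "j = ry W s" "iv = rx W v" "jv = ry W v"
    and c: "(tD W i j \<and> ((iv = i \<and> jv = j) \<or> (iv = Suc i \<and> jv = Suc j))) \<or>
         (tA W i (Suc j) \<and> ((iv = i \<and> jv = Suc j) \<or> (iv = Suc i \<and> jv = j)))"
    and w: "w \<in> W" "w \<noteq> s"
  shows "blkR W s v w"
proof -
  have ne: "rx W w \<noteq> i" "ry W w \<noteq> j" using rk_neq[OF w(1) s w(2)] i by auto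
  from c show ?thesis
  proof
    assume d: "tD W i j \<and> ((iv = i \<and> jv = j) \<or> (iv = Suc i \<and> jv = Suc j))"
    then have "rx W w < i \<longleftrightarrow> ry W w < j" using w(1) unfolding tD_def by blast
    then show ?thesis unfolding blkR_rank[OF s] using d ne i by (auto simp: less_Suc_eq)
  next
    assume d: "tA W i (Suc j) \<and> ((iv = i \<and> jv = Suc j) \<or> (iv = Suc i \<and> jv = j))"
    then have "rx W w < i \<longleftrightarrow> \<not> ry W w < Suc j" using w(1) unfolding tA_def by blast
    then show ?thesis unfolding blkR_rank[OF s] using d ne i by (auto simp: less_Suc_eq)
  qed
qed

lemma KB:
  assumes s: "s \<in> W" "s \<in> P" and v: "v \<in> P" "v \<notin> W"
    and i: "i = rx W s" "j = ry W s" "iv = rx W v" "jv = ry W v"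
  shows "sg_adj W s v \<longleftrightarrow> \<not> ((tD W i j \<and> ((iv = i \<and> jv = j) \<or> (iv = Suc i \<and> jv = Suc j))) \<or>
         (tA W i (Suc j) \<and> ((iv = i \<and> jv = Suc j) \<or> (iv = Suc i \<and> jv = j))))"
proof -
  have sv: "s \<noteq> v" using s v by auto
  have A: "sg_adj W s v \<longleftrightarrow> (\<exists>w\<in>W. w \<noteq> s \<and> w \<noteq> v \<and> \<not> blkR W s v w)"
    using adj_char[OF finW gp s(2) v(1) sv] .
  show ?thesis unfolding A using nonadj_B[OF s(1) v(2) i] adj_B_of_cond[OF s(1) v(2) i] v(2) by blast
qed

lemma nonadj_C:
  assumes s: "s \<in> W" and t: "t \<in> W" and st: "s \<noteq> t" and lt: "rx W s < rx W t"
    and nb: "\<forall>w\<in>W. w \<noteq> s \<and> w \<noteq> t \<longrightarrow> blkR W s t w"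
  shows "chainR W s t"
proof -
  define i j k l where "i = rx W s" "j = ry W s" "k = rx W t" "l = ry W t"
  note ijkl = this
  have B: "\<And>w. w \<in> W \<Longrightarrow> w \<noteq> s \<Longrightarrow> w \<noteq> t \<Longrightarrow> (rx W w < i \<longleftrightarrow> rx W w < k) \<and> (ry W w < j \<longleftrightarrow> ry W w < l)
     \<and> ((i < k \<longleftrightarrow> j < l) \<longleftrightarrow> (rx W w < i \<longleftrightarrow> ry W w < j))"
    using nb blkR_rank[OF s] ijkl by simp
  have N: "k < card W" "l < card W" "i < card W" "j < card W"
    using rx_less[OF finW] ry_less[OF finW] s t ijkl by auto
  have jl: "j \<noteq> l" using rk_neq[OF s t st] ijkl by simp
  have ik: "i < k" using lt ijkl by simp
  have k1: "k = Suc i"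
  proof (rule ccontr)
    assume "k \<noteq> Suc i"
    then have "Suc i < k" using ik by simp
    then obtain w where w: "w \<in> W" "rx W w = Suc i" using exx[of "Suc i" k] N by auto
    then have "w \<noteq> s" "w \<noteq> t" using ijkl \<open>Suc i < k\<close> by auto
    then show False using B[OF w(1)] w(2) \<open>Suc i < k\<close> by auto
  qed
  have l1: "l = Suc j \<or> j = Suc l"
  proof (rule ccontr)
    assume a: "\<not> (l = Suc j \<or> j = Suc l)"
    then consider "Suc j < l" | "Suc l < j" using jl by linarith
    then show False
    proof cases
      case 1
      then obtain w where w: "w \<in> W" "ry W w = Suc j" using exy[of "Suc j" l] N by auto
      then have "w \<noteq> s" "w \<noteq> t" using ijkl 1 by auto
      then show False using B[OF w(1)] w(2) 1 by auto
    next
      case 2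
      then obtain w where w: "w \<in> W" "ry W w = Suc l" using exy[of "Suc l" j] N by auto
      then have "w \<noteq> s" "w \<noteq> t" using ijkl 2 by auto
      then show False using B[OF w(1)] w(2) 2 by auto
    qed
  qed
  have ne: "\<And>w. w \<in> W \<Longrightarrow> w \<noteq> s \<Longrightarrow> w \<noteq> t \<Longrightarrow> rx W w \<noteq> i \<and> ry W w \<noteq> j \<and> rx W w \<noteq> k \<and> ry W w \<noteq> l"
    using rk_neq s t ijkl by blast
  from l1 show ?thesis
  proof
    assume l: "l = Suc j"
    have "tD W i j" unfolding tD_def
    proof
      fix w assume w: "w \<in> W"
      show "rx W w < i \<longleftrightarrow> ry W w < j"
      proof (cases "w = s \<or> w = t")
        case True then show ?thesis using ijkl k1 l by auto
      next
        case False then show ?thesis using B[OF w] k1 l by auto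
      qed
    qed
    then show ?thesis unfolding chainR_def using ijkl k1 l by simp
  next
    assume l: "j = Suc l"
    have "tA W i (Suc j)" unfolding tA_def
    proof
      fix w assume w: "w \<in> W"
      show "rx W w < i \<longleftrightarrow> \<not> ry W w < Suc j"
      proof (cases "w = s \<or> w = t")
        case True then show ?thesis using ijkl k1 l by auto
      next
        case False then show ?thesis using B[OF w] ne[OF w] k1 l by (auto simp: less_Suc_eq)
      qed
    qed
    then show ?thesis unfolding chainR_def using ijkl k1 l by simp
  qed
qed

lemma blk_of_chain:
  assumes s: "s \<in> W" and t: "t \<in> W" and c: "chainR W s t" and w: "w \<in> W" "w \<noteq> s" "w \<noteq> t"
  shows "blkR W s t w"
proof -
  have ne: "rx W w \<noteq> rx W s" "ry W w \<noteq> ry W s" "rx W w \<noteq> rx W t" "ry W w \<noteq> ry W t"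
    using rk_neq[OF w(1) s w(2)] rk_neq[OF w(1) t w(3)] by auto
  from c show ?thesis unfolding chainR_def
  proof
    assume d: "rx W t = Suc (rx W s) \<and> ry W t = Suc (ry W s) \<and> tD W (rx W s) (ry W s)"
    then have "rx W w < rx W s \<longleftrightarrow> ry W w < ry W s" using w(1) unfolding tD_def by blast
    then show ?thesis unfolding blkR_rank[OF s] using d ne by (auto simp: less_Suc_eq)
  next
    assume d: "rx W t = Suc (rx W s) \<and> ry W s = Suc (ry W t) \<and> tA W (rx W s) (Suc (ry W s))"
    then have "rx W w < rx W s \<longleftrightarrow> \<not> ry W w < Suc (ry W s)" using w(1) unfolding tA_def by blast
    then show ?thesis unfolding blkR_rank[OF s] using d ne by (auto simp: less_Suc_eq)
  qed
qed

lemma sg_adj_sym: "sg_adj W x y \<longleftrightarrow> sg_adj W y x"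
  unfolding sg_adj_alt using sqok_sym by blast

lemma KC:
  assumes s: "s \<in> W" "s \<in> P" and t: "t \<in> W" "t \<in> P" and st: "s \<noteq> t"
  shows "sg_adj W s t \<longleftrightarrow> \<not> (chainR W s t \<or> chainR W t s)"
proof -
  have A: "\<And>x y. x \<in> P \<Longrightarrow> y \<in> P \<Longrightarrow> x \<noteq> y \<Longrightarrow> sg_adj W x y \<longleftrightarrow> (\<exists>w\<in>W. w \<noteq> x \<and> w \<noteq> y \<and> \<not> blkR W x y w)"
    using adj_char[OF finW gp] by blast
  have "rx W s \<noteq> rx W t" using rk_neq[OF s(1) t(1) st] by simp
  then consider "rx W s < rx W t" | "rx W t < rx W s" by linarith
  then show ?thesis
  proof cases
    case 1
    show ?thesis
    proof
      assume "sg_adj W s t"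
      then obtain w where w: "w \<in> W" "w \<noteq> s" "w \<noteq> t" "\<not> blkR W s t w" using A[OF s(2) t(2) st] by blast
      have n1: "\<not> chainR W s t" using blk_of_chain[OF s(1) t(1) _ w(1-3)] w(4) by blast
      have n2: "\<not> chainR W t s" unfolding chainR_def using 1 by auto
      show "\<not> (chainR W s t \<or> chainR W t s)" using n1 n2 by blast
    next
      assume n: "\<not> (chainR W s t \<or> chainR W t s)"
      show "sg_adj W s t"
      proof (rule ccontr)
        assume "\<not> sg_adj W s t"
        then have "\<forall>w\<in>W. w \<noteq> s \<and> w \<noteq> t \<longrightarrow> blkR W s t w" using A[OF s(2) t(2) st] by blast
        then show False using nonadj_C[OF s(1) t(1) st 1] n by blast
      qed
    qed
  next
    case 2
    have ts: "t \<noteq> s" using st by simp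
    show ?thesis
    proof
      assume "sg_adj W s t"
      then have "sg_adj W t s" using sg_adj_sym by blast
      then obtain w where w: "w \<in> W" "w \<noteq> t" "w \<noteq> s" "\<not> blkR W t s w" using A[OF t(2) s(2) ts] by blast
      have n1: "\<not> chainR W t s" using blk_of_chain[OF t(1) s(1) _ w(1-3)] w(4) by blast
      have n2: "\<not> chainR W s t" unfolding chainR_def using 2 by auto
      show "\<not> (chainR W s t \<or> chainR W t s)" using n1 n2 by blast
    next
      assume n: "\<not> (chainR W s t \<or> chainR W t s)"
      show "sg_adj W s t"
      proof (rule ccontr)
        assume "\<not> sg_adj W s t"
        then have "\<not> sg_adj W t s" using sg_adj_sym by blast
        then have "\<forall>w\<in>W. w \<noteq> t \<and> w \<noteq> s \<longrightarrow> blkR W t s w" using A[OF t(2) s(2) ts] by blast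
        then show False using nonadj_C[OF t(1) s(1) ts 2] n by blast
      qed
    qed
  qed
qed

end

definition typed :: "point set \<Rightarrow> point \<Rightarrow> bool" where
  "typed W s \<longleftrightarrow> tD W (rx W s) (ry W s) \<or> tA W (rx W s) (Suc (ry W s))"
definition bS :: "point set \<Rightarrow> point \<Rightarrow> int" where
  "bS W s = (if tD W (rx W s) (ry W s) then Bk W (rx W s) (ry W s) else Bk W (rx W s) (Suc (ry W s)))"
definition Sf :: "point set \<Rightarrow> point \<Rightarrow> point" where
  "Sf W p = (if W = {} then (fst p, - fst p)
  else if p \<in> W then (if W = {p} then (-10, 16 * of_int (OFF (card W)) + 100)
     else if typed W p then shpos (even (rx W p)) (bS W p)
     else blockpt (2 * OFF (card W) + int (rx W p)) 0 0)
  else if tD W (rx W p) (ry W p) then blockpt (Bk W (rx W p) (ry W p)) (fst p) (- snd p)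
  else if tA W (rx W p) (ry W p) then blockpt (Bk W (rx W p) (ry W p)) (fst p) (snd p)
  else blockpt (Bk W (rx W p) (ry W p)) (fst p) (fst p))"

lemma scmp_sym: "sdist p q \<Longrightarrow> scmp p q \<longleftrightarrow> scmp q p"
  unfolding sdist_def scmp_def by auto
lemma sdist_sym: "sdist p q \<longleftrightarrow> sdist q p"
  unfolding sdist_def by auto

context SG begin

lemma bS_bounds: assumes "s \<in> W" shows "0 \<le> bS W s" "bS W s + 2 \<le> 2 * OFF (card W)"
proof -
  have a: "rx W s \<le> card W" "ry W s \<le> card W" "Suc (ry W s) \<le> card W"
    using rx_less[OF finW assms] ry_less[OF finW assms] by auto
  show "0 \<le> bS W s" "bS W s + 2 \<le> 2 * OFF (card W)"
    unfolding bS_def using Bk_bounds(1,2)[OF a(1) a(2) refl] Bk_bounds(1,2)[OF a(1) a(3) refl] by auto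
qed

lemma bS_ne: assumes "s \<in> W" "t \<in> W" "s \<noteq> t" shows "bS W s \<noteq> bS W t"
proof
  assume e: "bS W s = bS W t"
  have a: "rx W s \<le> card W" "ry W s \<le> card W" "Suc (ry W s) \<le> card W"
    "rx W t \<le> card W" "ry W t \<le> card W" "Suc (ry W t) \<le> card W"
    using rx_less[OF finW] ry_less[OF finW] assms by (auto simp: less_imp_le Suc_leI)
  have "rx W s = rx W t"
    using e unfolding bS_def
    by (auto split: if_splits dest: Bk_inj[OF a(1) a(2) a(4) a(5)] Bk_inj[OF a(1) a(3) a(4) a(5)]
        Bk_inj[OF a(1) a(2) a(4) a(6)] Bk_inj[OF a(1) a(3) a(4) a(6)])
  then show False using rk_neq[OF assms] by simp
qed

lemma chain_inc:
  assumes s: "s \<in> W" and t: "t \<in> W" and c: "chainR W s t"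
  shows "typed W s \<and> typed W t \<and> bS W t = bS W s + 1 \<and> (even (rx W t) \<longleftrightarrow> \<not> even (rx W s))"
proof -
  have st: "s \<noteq> t" using c unfolding chainR_def by auto
  have Ws: "W \<noteq> {s}" "W \<noteq> {t}" using s t st by auto
  have We: "W \<noteq> {}" using s by auto
  from c show ?thesis unfolding chainR_def
  proof
    assume d: "rx W t = Suc (rx W s) \<and> ry W t = Suc (ry W s) \<and> tD W (rx W s) (ry W s)"
    have dt: "tD W (rx W t) (ry W t)" using d tDswap[OF s] by simp
    have "\<not> tA W (rx W s) (ry W s)" "\<not> tA W (rx W t) (ry W t)" using tD_tA_excl[OF We] d dt by blast+
    then have "Bk W (rx W t) (ry W t) = Bk W (rx W s) (ry W s) + 1" using Bk_D d by simp
    then show ?thesis unfolding typed_def bS_def using d dt by simp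
  next
    assume d: "rx W t = Suc (rx W s) \<and> ry W s = Suc (ry W t) \<and> tA W (rx W s) (Suc (ry W s))"
    have e1: "rx W t = Suc (rx W s)" "Suc (ry W t) = ry W s" using d by auto
    have at0: "tA W (Suc (rx W s)) (ry W s)" using d tAswap[OF s] by blast
    then have at: "tA W (rx W t) (Suc (ry W t))" by (simp only: e1)
    have nd: "\<not> tD W (rx W s) (ry W s)" using excl2[OF s Ws(1)] d by blast
    have ndt: "\<not> tD W (rx W t) (ry W t)" using excl2[OF t Ws(2)] at by blast
    have "Bk W (Suc (rx W s)) (ry W s) = Bk W (rx W s) (Suc (ry W s)) + 1"
      using Bk_A[of W "rx W s" "ry W s"] d at0 by blast
    then have "Bk W (rx W t) (Suc (ry W t)) = Bk W (rx W s) (Suc (ry W s)) + 1" by (simp only: e1)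
    moreover have "bS W s = Bk W (rx W s) (Suc (ry W s))" unfolding bS_def using nd by simp
    moreover have "bS W t = Bk W (rx W t) (Suc (ry W t))" unfolding bS_def using ndt by simp
    moreover have "typed W s" using d unfolding typed_def by blast
    moreover have "typed W t" using at unfolding typed_def by blast
    moreover have "even (rx W t) \<longleftrightarrow> \<not> even (rx W s)" using e1 by simp
    ultimately show ?thesis by simp
  qed
qed

lemma inc_chain:
  assumes s: "s \<in> W" and t: "t \<in> W" and st: "s \<noteq> t" and ts: "typed W s" "typed W t"
    and inc: "bS W t = bS W s + 1"
  shows "chainR W s t"
proof -
  have Ws: "W \<noteq> {s}" "W \<noteq> {t}" using s t st by auto
  have We: "W \<noteq> {}" using s by auto
  have a: "Suc (rx W s) \<le> card W" "Suc (ry W s) \<le> card W" "ry W s \<le> card W"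
    "rx W t \<le> card W" "ry W t \<le> card W" "Suc (ry W t) \<le> card W"
    using rx_less[OF finW] ry_less[OF finW] s t by (auto simp: less_imp_le Suc_leI)
  have rne: "ry W t \<noteq> ry W s" using rk_neq[OF t s] st by auto
  show ?thesis
  proof (cases "tD W (rx W s) (ry W s)")
    case True
    have dt: "tD W (Suc (rx W s)) (Suc (ry W s))" using True tDswap[OF s] by simp
    have "\<not> tA W (rx W s) (ry W s)" "\<not> tA W (Suc (rx W s)) (Suc (ry W s))" using tD_tA_excl[OF We] True dt by blast+
    then have up: "bS W s + 1 = Bk W (Suc (rx W s)) (Suc (ry W s))" using Bk_D True unfolding bS_def by simp
    show ?thesis
    proof (cases "tD W (rx W t) (ry W t)")
      case True
      then have "Bk W (rx W t) (ry W t) = Bk W (Suc (rx W s)) (Suc (ry W s))" using up inc unfolding bS_def by simp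
      from Bk_inj[OF a(4) a(5) a(1) a(2) this] show ?thesis unfolding chainR_def using \<open>tD W (rx W s) (ry W s)\<close> by simp
    next
      case False
      then have "Bk W (rx W t) (Suc (ry W t)) = Bk W (Suc (rx W s)) (Suc (ry W s))" using up inc unfolding bS_def by simp
      from Bk_inj[OF a(4) a(6) a(1) a(2) this] show ?thesis using rne by simp
    qed
  next
    case False
    then have as: "tA W (rx W s) (Suc (ry W s))" using ts(1) unfolding typed_def by simp
    have at: "tA W (Suc (rx W s)) (ry W s)" using as tAswap[OF s] by simp
    have up: "bS W s + 1 = Bk W (Suc (rx W s)) (ry W s)" using Bk_A[OF as at] False unfolding bS_def by simp
    show ?thesis
    proof (cases "tD W (rx W t) (ry W t)")
      case True
      then have "Bk W (rx W t) (ry W t) = Bk W (Suc (rx W s)) (ry W s)" using up inc unfolding bS_def by simp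
      from Bk_inj[OF a(4) a(5) a(1) a(3) this] show ?thesis using rne by simp
    next
      case False
      then have "Bk W (rx W t) (Suc (ry W t)) = Bk W (Suc (rx W s)) (ry W s)" using up inc unfolding bS_def by simp
      from Bk_inj[OF a(4) a(6) a(1) a(3) this] show ?thesis unfolding chainR_def using as by simp
    qed
  qed
qed

end

context SG begin

lemma Sf_W: "p \<in> W \<Longrightarrow> W \<noteq> {p} \<Longrightarrow> Sf W p = (if typed W p then shpos (even (rx W p)) (bS W p) else blockpt (2 * OFF (card W) + int (rx W p)) 0 0)"
  unfolding Sf_def by auto

lemma Sf_nW_block: "p \<notin> W \<Longrightarrow> W \<noteq> {} \<Longrightarrow> \<exists>a b. Sf W p = blockpt (Bk W (rx W p) (ry W p)) a b"
  unfolding Sf_def by auto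

lemma pairC:
  assumes s: "s \<in> W" "s \<in> P" and t: "t \<in> W" "t \<in> P" and st: "s \<noteq> t"
  shows "sdist (Sf W s) (Sf W t) \<and> (sg_adj W s t \<longleftrightarrow> scmp (Sf W s) (Sf W t))"
proof -
  have Ws: "W \<noteq> {s}" "W \<noteq> {t}" using s t st by auto
  note K = KC[OF s t st]
  have ch1: "chainR W s t \<Longrightarrow> typed W s \<and> typed W t" using chain_inc[OF s(1) t(1)] by blast
  have ch2: "chainR W t s \<Longrightarrow> typed W s \<and> typed W t" using chain_inc[OF t(1) s(1)] by blast
  have bs: "0 \<le> bS W s" "bS W s + 2 \<le> 2 * OFF (card W)" using bS_bounds[OF s(1)] by auto
  have bt: "0 \<le> bS W t" "bS W t + 2 \<le> 2 * OFF (card W)" using bS_bounds[OF t(1)] by auto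
  have rne: "rx W s \<noteq> rx W t" using rk_neq[OF s(1) t(1) st] by simp
  show ?thesis
  proof (cases "typed W s"; cases "typed W t")
    assume ts: "typed W s" "typed W t"
    have SS: "Sf W s = shpos (even (rx W s)) (bS W s)" "Sf W t = shpos (even (rx W t)) (bS W t)"
      using Sf_W[OF s(1) Ws(1)] Sf_W[OF t(1) Ws(2)] ts by auto
    have ne: "bS W s \<noteq> bS W t" using bS_ne[OF s(1) t(1) st] .
    note L = L3[of "even (rx W s)" "bS W s" "even (rx W t)" "bS W t"]
    have L': "sdist (Sf W s) (Sf W t) \<and> (scmp (Sf W s) (Sf W t) \<longleftrightarrow>
       (even (rx W s) \<longleftrightarrow> even (rx W t)) \<or> bS W t \<ge> bS W s + 2 \<or> bS W s \<ge> bS W t + 2)"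
      using L ne unfolding SS by auto
    have "sg_adj W s t \<longleftrightarrow> scmp (Sf W s) (Sf W t)"
    proof
      assume "sg_adj W s t"
      then have n: "\<not> chainR W s t" "\<not> chainR W t s" using K by auto
      show "scmp (Sf W s) (Sf W t)"
      proof (rule ccontr)
        assume "\<not> scmp (Sf W s) (Sf W t)"
        then have e: "(even (rx W s) \<longleftrightarrow> \<not> even (rx W t))" "bS W t < bS W s + 2" "bS W s < bS W t + 2" using L' by auto
        then have "bS W t = bS W s + 1 \<or> bS W s = bS W t + 1" using ne by linarith
        then show False using inc_chain[OF s(1) t(1) st ts] inc_chain[OF t(1) s(1) _ ts(2) ts(1)] st n by auto
      qed
    next
      assume sc: "scmp (Sf W s) (Sf W t)"
      show "sg_adj W s t"
      proof (rule ccontr)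
        assume "\<not> sg_adj W s t"
        then have "chainR W s t \<or> chainR W t s" using K by auto
        then show False
        proof
          assume "chainR W s t"
          from chain_inc[OF s(1) t(1) this] sc L' show False by auto
        next
          assume "chainR W t s"
          from chain_inc[OF t(1) s(1) this] sc L' show False by auto
        qed
      qed
    qed
    then show ?thesis using L' by blast
  next
    assume ts: "typed W s" "\<not> typed W t"
    have SS: "Sf W s = shpos (even (rx W s)) (bS W s)" "Sf W t = blockpt (2 * OFF (card W) + int (rx W t)) 0 0"
      using Sf_W[OF s(1) Ws(1)] Sf_W[OF t(1) Ws(2)] ts by auto
    have c: "2 * OFF (card W) + int (rx W t) \<noteq> bS W s" "2 * OFF (card W) + int (rx W t) \<noteq> bS W s + 1"
      using bs by auto
    have L: "sdist (Sf W t) (Sf W s) \<and> scmp (Sf W t) (Sf W s)" using L2[of _ 0 0 "even (rx W s)" "bS W s"] c unfolding SS by auto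
    have "sg_adj W s t" using K ch1 ch2 ts by auto
    then show ?thesis using L sdist_sym scmp_sym by blast
  next
    assume ts: "\<not> typed W s" "typed W t"
    have SS: "Sf W t = shpos (even (rx W t)) (bS W t)" "Sf W s = blockpt (2 * OFF (card W) + int (rx W s)) 0 0"
      using Sf_W[OF s(1) Ws(1)] Sf_W[OF t(1) Ws(2)] ts by auto
    have c: "2 * OFF (card W) + int (rx W s) \<noteq> bS W t" "2 * OFF (card W) + int (rx W s) \<noteq> bS W t + 1"
      using bt by auto
    have L: "sdist (Sf W s) (Sf W t) \<and> scmp (Sf W s) (Sf W t)" using L2[of _ 0 0 "even (rx W t)" "bS W t"] c unfolding SS by auto
    have "sg_adj W s t" using K ch1 ch2 ts by auto
    then show ?thesis using L by blast
  next
    assume ts: "\<not> typed W s" "\<not> typed W t"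
    have SS: "Sf W s = blockpt (2 * OFF (card W) + int (rx W s)) 0 0" "Sf W t = blockpt (2 * OFF (card W) + int (rx W t)) 0 0"
      using Sf_W[OF s(1) Ws(1)] Sf_W[OF t(1) Ws(2)] ts by auto
    have L: "sdist (Sf W s) (Sf W t) \<and> scmp (Sf W s) (Sf W t)" unfolding SS using L1 rne by simp
    have "sg_adj W s t" using K ch1 ch2 ts by auto
    then show ?thesis using L by blast
  qed
qed

lemma pairB:
  assumes s: "s \<in> W" "s \<in> P" and v: "v \<in> P" "v \<notin> W"
  shows "sdist (Sf W s) (Sf W v) \<and> (sg_adj W s v \<longleftrightarrow> scmp (Sf W s) (Sf W v))"
proof -
  have We: "W \<noteq> {}" using s by auto
  have sv: "s \<noteq> v" using s v by auto
  obtain a b where Sv: "Sf W v = blockpt (Bk W (rx W v) (ry W v)) a b" using Sf_nW_block[OF v(2) We] by blast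
  have vb: "rx W v \<le> card W" "ry W v \<le> card W" using rx_le[OF finW] ry_le[OF finW] by auto
  have Bv: "0 \<le> Bk W (rx W v) (ry W v)" "Bk W (rx W v) (ry W v) + 2 \<le> 2 * OFF (card W)"
    using Bk_bounds(1,2)[OF vb refl] by auto
  show ?thesis
  proof (cases "W = {s}")
    case True
    have Ss: "Sf W s = (-10, 16 * of_int (OFF (card W)) + 100)" unfolding Sf_def using True by simp
    have "16 * real_of_int (OFF (card W)) + 100 \<ge> 8 * of_int (2 * OFF (card W)) + 2" by simp
    from L4[OF Bv(1) _ this, of a b] Bv(2) have L: "sdist (Sf W s) (Sf W v) \<and> \<not> scmp (Sf W s) (Sf W v)"
      unfolding Ss Sv by simp
    have "\<not> sg_adj W s v" using adj_char[OF finW gp s(2) v(1) sv] True by auto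
    then show ?thesis using L by blast
  next
    case False
    have sb: "rx W s < card W" "ry W s < card W" using rx_less[OF finW s(1)] ry_less[OF finW s(1)] by auto
    have sb': "rx W s \<le> card W" "ry W s \<le> card W" "Suc (rx W s) \<le> card W" "Suc (ry W s) \<le> card W" using sb by auto
    note K = KB[OF s v refl refl refl refl]
    show ?thesis
    proof (cases "tD W (rx W s) (ry W s)")
      case True
      have nA: "\<not> tA W (rx W s) (Suc (ry W s))" using excl2[OF s(1) False] True by blast
      have dt: "tD W (Suc (rx W s)) (Suc (ry W s))" using True tDswap[OF s(1)] by simp
      have "\<not> tA W (rx W s) (ry W s)" "\<not> tA W (Suc (rx W s)) (Suc (ry W s))" using tD_tA_excl[OF We] True dt by blast+
      then have up: "Bk W (Suc (rx W s)) (Suc (ry W s)) = Bk W (rx W s) (ry W s) + 1" using Bk_D by simp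
      have Ss: "Sf W s = shpos (even (rx W s)) (Bk W (rx W s) (ry W s))"
        using Sf_W[OF s(1) False] True unfolding typed_def bS_def by simp
      have eq: "(Bk W (rx W v) (ry W v) = Bk W (rx W s) (ry W s) \<or> Bk W (rx W v) (ry W v) = Bk W (rx W s) (ry W s) + 1)
        \<longleftrightarrow> ((rx W v = rx W s \<and> ry W v = ry W s) \<or> (rx W v = Suc (rx W s) \<and> ry W v = Suc (ry W s)))"
        unfolding up[symmetric] using Bk_inj[OF vb sb'(1,2)] Bk_inj[OF vb sb'(3,4)] by auto
      have L: "sdist (Sf W v) (Sf W s) \<and> (scmp (Sf W v) (Sf W s) \<longleftrightarrow> \<not> ((rx W v = rx W s \<and> ry W v = ry W s) \<or> (rx W v = Suc (rx W s) \<and> ry W v = Suc (ry W s))))"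
        using L2[of "Bk W (rx W v) (ry W v)" a b "even (rx W s)" "Bk W (rx W s) (ry W s)"] eq unfolding Sv Ss by blast
      then show ?thesis using K True nA sdist_sym scmp_sym by metis
    next
      case nD: False
      show ?thesis
      proof (cases "tA W (rx W s) (Suc (ry W s))")
        case True
        have at: "tA W (Suc (rx W s)) (ry W s)" using True tAswap[OF s(1)] by simp
        have up: "Bk W (Suc (rx W s)) (ry W s) = Bk W (rx W s) (Suc (ry W s)) + 1" using Bk_A[OF True at] .
        have Ss: "Sf W s = shpos (even (rx W s)) (Bk W (rx W s) (Suc (ry W s)))"
          using Sf_W[OF s(1) False] True nD unfolding typed_def bS_def by simp
        have eq: "(Bk W (rx W v) (ry W v) = Bk W (rx W s) (Suc (ry W s)) \<or> Bk W (rx W v) (ry W v) = Bk W (rx W s) (Suc (ry W s)) + 1)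
          \<longleftrightarrow> ((rx W v = rx W s \<and> ry W v = Suc (ry W s)) \<or> (rx W v = Suc (rx W s) \<and> ry W v = ry W s))"
          unfolding up[symmetric] using Bk_inj[OF vb sb'(1,4)] Bk_inj[OF vb sb'(3,2)] by auto
        have L: "sdist (Sf W v) (Sf W s) \<and> (scmp (Sf W v) (Sf W s) \<longleftrightarrow> \<not> ((rx W v = rx W s \<and> ry W v = Suc (ry W s)) \<or> (rx W v = Suc (rx W s) \<and> ry W v = ry W s)))"
          using L2[of "Bk W (rx W v) (ry W v)" a b "even (rx W s)" "Bk W (rx W s) (Suc (ry W s))"] eq unfolding Sv Ss by blast
        then show ?thesis using K True nD sdist_sym scmp_sym by metis
      next
        case nA: False
        have Ss: "Sf W s = blockpt (2 * OFF (card W) + int (rx W s)) 0 0"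
          using Sf_W[OF s(1) False] nA nD unfolding typed_def by simp
        have "2 * OFF (card W) + int (rx W s) \<noteq> Bk W (rx W v) (ry W v)" using Bv by auto
        then have L: "sdist (Sf W s) (Sf W v) \<and> scmp (Sf W s) (Sf W v)" unfolding Ss Sv using L1 by blast
        then show ?thesis using K nA nD by blast
      qed
    qed
  qed
qed

lemma pairA:
  assumes u: "u \<in> P" "u \<notin> W" and v: "v \<in> P" "v \<notin> W" and uv: "u \<noteq> v" and We: "W \<noteq> {}"
  shows "sdist (Sf W u) (Sf W v) \<and> (sg_adj W u v \<longleftrightarrow> scmp (Sf W u) (Sf W v))"
proof -
  have d: "fst u \<noteq> fst v" "snd u \<noteq> snd v" using gpd[of u v] u v uv by auto
  note A = adj_char[OF finW gp u(1) v(1) uv]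
  have ub: "rx W u \<le> card W" "ry W u \<le> card W" and vb: "rx W v \<le> card W" "ry W v \<le> card W"
    using rx_le[OF finW] ry_le[OF finW] by auto
  show ?thesis
  proof (cases "rx W u = rx W v \<and> ry W u = ry W v")
    case False
    obtain a b where Su: "Sf W u = blockpt (Bk W (rx W u) (ry W u)) a b" using Sf_nW_block[OF u(2) We] by blast
    obtain a' b' where Sv: "Sf W v = blockpt (Bk W (rx W v) (ry W v)) a' b'" using Sf_nW_block[OF v(2) We] by blast
    have "Bk W (rx W u) (ry W u) \<noteq> Bk W (rx W v) (ry W v)" using Bk_inj[OF ub vb] False by blast
    then have L: "sdist (Sf W u) (Sf W v) \<and> scmp (Sf W u) (Sf W v)" unfolding Su Sv using L1 by blast
    have "\<exists>w\<in>W. \<not> blkR W u v w"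
    proof (cases "rx W u = rx W v")
      case False
      have m: "min (rx W u) (rx W v) < max (rx W u) (rx W v)" "max (rx W u) (rx W v) \<le> card W" using False ub vb by auto
      then obtain w where w: "w \<in> W" "rx W w = min (rx W u) (rx W v)" using exx by blast
      then have "\<not> blkR W u v w" unfolding blkR_def using False by (auto simp: min_def)
      then show ?thesis using w by blast
    next
      case True
      then have ne: "ry W u \<noteq> ry W v" using \<open>\<not> (rx W u = rx W v \<and> ry W u = ry W v)\<close> by blast
      have m: "min (ry W u) (ry W v) < max (ry W u) (ry W v)" "max (ry W u) (ry W v) \<le> card W" using ne ub vb by auto
      then obtain w where w: "w \<in> W" "ry W w = min (ry W u) (ry W v)" using exy by blast
      then have "\<not> blkR W u v w" unfolding blkR_def using ne by (auto simp: min_def)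
      then show ?thesis using w by blast
    qed
    then obtain w where w: "w \<in> W" "\<not> blkR W u v w" by blast
    then have "w \<noteq> u" "w \<noteq> v" using u(2) v(2) by auto
    then have "sg_adj W u v" using A w by blast
    then show ?thesis using L by blast
  next
    case True
    define i j where "i = rx W u" "j = ry W u"
    have ij: "rx W v = i" "ry W v = j" using True i_j_def by auto
    have bl: "\<And>w. blkR W u v w \<longleftrightarrow> (cmp u v \<longleftrightarrow> (rx W w < i \<longleftrightarrow> ry W w < j))"
      unfolding blkR_def using ij i_j_def by simp
    have G: "sg_adj W u v \<longleftrightarrow> (\<exists>w\<in>W. \<not> (cmp u v \<longleftrightarrow> (rx W w < i \<longleftrightarrow> ry W w < j)))"
      unfolding A bl using u(2) v(2) by auto
    have c: "cmp u v \<longleftrightarrow> (fst u < fst v \<longleftrightarrow> snd u < snd v)" unfolding cmp_def ..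
    show ?thesis
    proof (cases "tD W i j")
      case True
      have S: "Sf W u = blockpt (Bk W i j) (fst u) (- snd u)" "Sf W v = blockpt (Bk W i j) (fst v) (- snd v)"
        unfolding Sf_def using We u(2) v(2) True ij i_j_def by auto
      have "sg_adj W u v \<longleftrightarrow> \<not> cmp u v" using G True We unfolding tD_def by auto
      then show ?thesis unfolding S L1s using d c by auto
    next
      case nD: False
      show ?thesis
      proof (cases "tA W i j")
        case True
        have S: "Sf W u = blockpt (Bk W i j) (fst u) (snd u)" "Sf W v = blockpt (Bk W i j) (fst v) (snd v)"
          unfolding Sf_def using We u(2) v(2) True nD ij i_j_def by auto
        have "sg_adj W u v \<longleftrightarrow> cmp u v" using G True We unfolding tA_def by auto
        then show ?thesis unfolding S L1s using d c by auto
      next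
        case nA: False
        have S: "Sf W u = blockpt (Bk W i j) (fst u) (fst u)" "Sf W v = blockpt (Bk W i j) (fst v) (fst v)"
          unfolding Sf_def using We u(2) v(2) nA nD ij i_j_def by auto
        obtain w1 where w1: "w1 \<in> W" "\<not> (rx W w1 < i \<longleftrightarrow> ry W w1 < j)" using nD unfolding tD_def by blast
        obtain w2 where w2: "w2 \<in> W" "(rx W w2 < i \<longleftrightarrow> ry W w2 < j)" using nA unfolding tA_def by blast
        have "sg_adj W u v" using G w1 w2 by (cases "cmp u v") blast+
        then show ?thesis unfolding S L1s using d by auto
      qed
    qed
  qed
qed

lemma pair_all:
  assumes u: "u \<in> P" and v: "v \<in> P" and uv: "u \<noteq> v"
  shows "sdist (Sf W u) (Sf W v) \<and> (sg_adj W u v \<longleftrightarrow> scmp (Sf W u) (Sf W v))"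
proof (cases "W = {}")
  case True
  have d: "fst u \<noteq> fst v" using gpd[of u v] u v uv by auto
  have "\<not> sg_adj W u v" unfolding sg_adj_alt using True by simp
  moreover have "Sf W u = (fst u, - fst u)" "Sf W v = (fst v, - fst v)" unfolding Sf_def using True by auto
  ultimately show ?thesis using d unfolding sdist_def scmp_def by auto
next
  case We: False
  show ?thesis
  proof (cases "u \<in> W"; cases "v \<in> W")
    assume "u \<in> W" "v \<in> W" then show ?thesis using pairC u v uv by blast
  next
    assume "u \<in> W" "v \<notin> W" then show ?thesis using pairB u v by blast
  next
    assume a: "u \<notin> W" "v \<in> W"
    then have "sdist (Sf W v) (Sf W u) \<and> (sg_adj W v u \<longleftrightarrow> scmp (Sf W v) (Sf W u))" using pairB u v by blast
    then show ?thesis using sdist_sym scmp_sym sg_adj_sym by metis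
  next
    assume "u \<notin> W" "v \<notin> W" then show ?thesis using pairA u v uv We by blast
  qed
qed

end

lemma dom_scmp: "sdist a b \<Longrightarrow> (dominates a b \<or> dominates b a) \<longleftrightarrow> scmp a b"
  unfolding sdist_def scmp_def dominates_def by auto

lemma repr:
  assumes "finite P" "finite W" "general_pos (P \<union> W)"
  shows "\<exists>S f. finite S \<and> general_pos S \<and> bij_betw f P S \<and>
     (\<forall>u\<in>P. \<forall>v\<in>P. u \<noteq> v \<longrightarrow> (sg_adj W u v \<longleftrightarrow> dominates (f u) (f v) \<or> dominates (f v) (f u)))"
proof -
  interpret SG P W using assms(2,3) by unfold_locales
  have pa: "\<And>u v. u \<in> P \<Longrightarrow> v \<in> P \<Longrightarrow> u \<noteq> v \<Longrightarrow> sdist (Sf W u) (Sf W v) \<and> (sg_adj W u v \<longleftrightarrow> scmp (Sf W u) (Sf W v))"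
    using pair_all by blast
  have inj: "inj_on (Sf W) P"
  proof (rule inj_onI)
    fix x y assume xy: "x \<in> P" "y \<in> P" "Sf W x = Sf W y"
    show "x = y"
    proof (rule ccontr)
      assume "x \<noteq> y"
      then have "sdist (Sf W x) (Sf W y)" using pa xy(1,2) by blast
      then show False using xy(3) unfolding sdist_def by simp
    qed
  qed
  have gpS: "general_pos (Sf W ` P)"
    unfolding general_pos_def
  proof (intro ballI impI)
    fix p q assume pq: "p \<in> Sf W ` P" "q \<in> Sf W ` P" "p \<noteq> q"
    then obtain u v where uv: "u \<in> P" "v \<in> P" "p = Sf W u" "q = Sf W v" by blast
    then have "u \<noteq> v" using pq(3) by blast
    then have "sdist p q" using pa uv by blast
    then show "fst p \<noteq> fst q \<and> snd p \<noteq> snd q" unfolding sdist_def .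
  qed
  show ?thesis
    apply (rule exI[of _ "Sf W ` P"], rule exI[of _ "Sf W"])
    using assms(1) inj gpS pa dom_scmp by (auto simp: bij_betw_def)
qed

lemma onewit:
  assumes "finite S" "general_pos S"
  shows "\<exists>w. general_pos (S \<union> {w}) \<and>
     (\<forall>u\<in>S. \<forall>v\<in>S. u \<noteq> v \<longrightarrow> (sg_adj {w} u v \<longleftrightarrow> dominates u v \<or> dominates v u))"
proof (cases "S = {}")
  case True then show ?thesis unfolding general_pos_def by auto
next
  case False
  define w where "w = (Max (fst ` S) + 1, Min (snd ` S) - 1)"
  have wx: "fst p < fst w" if p: "p \<in> S" for p
  proof -
    have "fst p \<le> Max (fst ` S)" using Max_ge[of "fst ` S" "fst p"] assms(1) p by auto
    then show ?thesis unfolding w_def by simp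
  qed
  have wy: "snd w < snd p" if p: "p \<in> S" for p
  proof -
    have "Min (snd ` S) \<le> snd p" using Min_le[of "snd ` S" "snd p"] assms(1) p by auto
    then show ?thesis unfolding w_def by simp
  qed
  have gp: "general_pos (S \<union> {w})" using assms(2) wx wy unfolding general_pos_def by fastforce
  have d: "\<And>u v. u \<in> S \<Longrightarrow> v \<in> S \<Longrightarrow> u \<noteq> v \<Longrightarrow> fst u \<noteq> fst v \<and> snd u \<noteq> snd v"
    using assms(2) unfolding general_pos_def by blast
  have "sg_adj {w} u v \<longleftrightarrow> dominates u v \<or> dominates v u" if uv: "u \<in> S" "v \<in> S" "u \<noteq> v" for u v
  proof -
    have dd: "fst u \<noteq> fst v" "snd u \<noteq> snd v" "fst w \<noteq> fst u" "fst w \<noteq> fst v" "snd w \<noteq> snd u" "snd w \<noteq> snd v"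
      using d[OF uv] wx[OF uv(1)] wx[OF uv(2)] wy[OF uv(1)] wy[OF uv(2)] by auto
    have "sg_adj {w} u v \<longleftrightarrow> sqok u v w" unfolding sg_adj_alt using uv(3) by simp
    also have "\<dots> \<longleftrightarrow> \<not> blk u v w" using sqok_iff[OF dd] .
    also have "\<dots> \<longleftrightarrow> (fst u < fst v \<longleftrightarrow> snd u < snd v)"
      unfolding blk_def using wx[OF uv(1)] wx[OF uv(2)] wy[OF uv(1)] wy[OF uv(2)] by auto
    also have "\<dots> \<longleftrightarrow> dominates u v \<or> dominates v u" unfolding dominates_def using dd(1,2) by auto
    finally show ?thesis .
  qed
  then show ?thesis using gp by blast
qed

lemma sg_adj_irrefl: "\<not> sg_adj W x x" unfolding sg_adj_def by simp

theorem mainTheorem10: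
  "(\<forall>(V :: 'a set) E. finite_simple_graph V E \<longrightarrow>
      ((\<exists>P W :: point set. finite P \<and> finite W \<and> general_pos (P \<union> W) \<and>
          graph_iso V E P (sg_adj W))
       \<longleftrightarrow> permutation_graph V E))
   \<and>
   (\<forall>P W :: point set. finite P \<and> finite W \<and> general_pos (P \<union> W) \<longrightarrow>
      (\<exists>P' W' :: point set. finite P' \<and> finite W' \<and> general_pos (P' \<union> W') \<and> card W' \<le> 1 \<and>
          graph_iso P (sg_adj W) P' (sg_adj W')))"
proof (intro conjI allI impI)
  fix V :: "'a set" and E
  assume fsg: "finite_simple_graph V E"
  have irr: "\<And>u. \<not> E u u" using fsg unfolding finite_simple_graph_def by blast
  show "(\<exists>P W :: point set. finite P \<and> finite W \<and> general_pos (P \<union> W) \<and> graph_iso V E P (sg_adj W))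
       \<longleftrightarrow> permutation_graph V E"
  proof
    assume "\<exists>P W :: point set. finite P \<and> finite W \<and> general_pos (P \<union> W) \<and> graph_iso V E P (sg_adj W)"
    then obtain P W h where PW: "finite P" "finite W" "general_pos (P \<union> W)" and h: "bij_betw h V P"
      and hE: "\<forall>u\<in>V. \<forall>v\<in>V. E u v \<longleftrightarrow> sg_adj W (h u) (h v)"
      unfolding graph_iso_def by blast
    obtain S f where S: "finite S" "general_pos S" "bij_betw f P S"
      and fS: "\<forall>u\<in>P. \<forall>v\<in>P. u \<noteq> v \<longrightarrow> (sg_adj W u v \<longleftrightarrow> dominates (f u) (f v) \<or> dominates (f v) (f u))"
      using repr[OF PW] by blast
    have b: "bij_betw (f \<circ> h) V S" using bij_betw_trans[OF h S(3)] .
    have hi: "inj_on h V" using h bij_betw_def by blast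
    have hP: "\<And>u. u \<in> V \<Longrightarrow> h u \<in> P" using h bij_betwE by blast
    have "\<forall>u\<in>V. \<forall>v\<in>V. u \<noteq> v \<longrightarrow> (E u v \<longleftrightarrow> dominates ((f \<circ> h) u) ((f \<circ> h) v) \<or> dominates ((f \<circ> h) v) ((f \<circ> h) u))"
    proof (intro ballI impI)
      fix u v assume uv: "u \<in> V" "v \<in> V" "u \<noteq> v"
      then have hne: "h u \<noteq> h v" using hi inj_on_def by metis
      have e1: "E u v \<longleftrightarrow> sg_adj W (h u) (h v)" using hE[rule_format, OF uv(1) uv(2)] .
      have e2: "sg_adj W (h u) (h v) \<longleftrightarrow> dominates (f (h u)) (f (h v)) \<or> dominates (f (h v)) (f (h u))"
        using fS[rule_format, OF hP[OF uv(1)] hP[OF uv(2)] hne] .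
      show "E u v \<longleftrightarrow> dominates ((f \<circ> h) u) ((f \<circ> h) v) \<or> dominates ((f \<circ> h) v) ((f \<circ> h) u)"
        unfolding comp_def using e1 e2 by blast
    qed
    then show "permutation_graph V E" unfolding permutation_graph_def
      by (intro exI[of _ S] exI[of _ "f \<circ> h"]) (simp add: S(1,2) b)
  next
    assume "permutation_graph V E"
    then obtain S :: "point set" and f where S: "finite S" "general_pos S" "bij_betw f V S"
      and fE: "\<forall>u\<in>V. \<forall>v\<in>V. u \<noteq> v \<longrightarrow> (E u v \<longleftrightarrow> dominates (f u) (f v) \<or> dominates (f v) (f u))"
      unfolding permutation_graph_def by blast
    obtain w where w: "general_pos (S \<union> {w})"
      and ws: "\<forall>u\<in>S. \<forall>v\<in>S. u \<noteq> v \<longrightarrow> (sg_adj {w} u v \<longleftrightarrow> dominates u v \<or> dominates v u)"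
      using onewit[OF S(1,2)] by blast
    have fi: "inj_on f V" using S(3) bij_betw_def by blast
    have fS: "\<And>u. u \<in> V \<Longrightarrow> f u \<in> S" using S(3) bij_betwE by blast
    have "\<forall>u\<in>V. \<forall>v\<in>V. E u v \<longleftrightarrow> sg_adj {w} (f u) (f v)"
    proof (intro ballI)
      fix u v assume uv: "u \<in> V" "v \<in> V"
      show "E u v \<longleftrightarrow> sg_adj {w} (f u) (f v)"
      proof (cases "u = v")
        case True then show ?thesis using irr sg_adj_irrefl by simp
      next
        case False
        then have fne: "f u \<noteq> f v" using fi uv inj_on_def by metis
        have e1: "E u v \<longleftrightarrow> dominates (f u) (f v) \<or> dominates (f v) (f u)" using fE[rule_format, OF uv(1) uv(2) False] .
        have e2: "sg_adj {w} (f u) (f v) \<longleftrightarrow> dominates (f u) (f v) \<or> dominates (f v) (f u)"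
          using ws[rule_format, OF fS[OF uv(1)] fS[OF uv(2)] fne] .
        show ?thesis using e1 e2 by blast
      qed
    qed
    then have "graph_iso V E S (sg_adj {w})" unfolding graph_iso_def using S(3) by blast
    then show "\<exists>P W :: point set. finite P \<and> finite W \<and> general_pos (P \<union> W) \<and> graph_iso V E P (sg_adj W)"
      using S(1) w by (intro exI[of _ S] exI[of _ "{w}"]) simp
  qed
next
  fix P W :: "point set"
  assume PW: "finite P \<and> finite W \<and> general_pos (P \<union> W)"
  obtain S f where S: "finite S" "general_pos S" "bij_betw f P S"
    and fS: "\<forall>u\<in>P. \<forall>v\<in>P. u \<noteq> v \<longrightarrow> (sg_adj W u v \<longleftrightarrow> dominates (f u) (f v) \<or> dominates (f v) (f u))"
    using repr[of P W] PW by (elim conjE) blast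
  obtain w where w: "general_pos (S \<union> {w})"
    and ws: "\<forall>u\<in>S. \<forall>v\<in>S. u \<noteq> v \<longrightarrow> (sg_adj {w} u v \<longleftrightarrow> dominates u v \<or> dominates v u)"
    using onewit[OF S(1,2)] by blast
  have fi: "inj_on f P" using S(3) bij_betw_def by blast
  have fP: "\<And>u. u \<in> P \<Longrightarrow> f u \<in> S" using S(3) bij_betwE by blast
  have "\<forall>u\<in>P. \<forall>v\<in>P. sg_adj W u v \<longleftrightarrow> sg_adj {w} (f u) (f v)"
  proof (intro ballI)
    fix u v assume uv: "u \<in> P" "v \<in> P"
    show "sg_adj W u v \<longleftrightarrow> sg_adj {w} (f u) (f v)"
    proof (cases "u = v")
      case True then show ?thesis using sg_adj_irrefl by simp
    next
      case False
      then have fne: "f u \<noteq> f v" using fi uv inj_on_def by metis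
      have e1: "sg_adj W u v \<longleftrightarrow> dominates (f u) (f v) \<or> dominates (f v) (f u)" using fS[rule_format, OF uv(1) uv(2) False] .
      have e2: "sg_adj {w} (f u) (f v) \<longleftrightarrow> dominates (f u) (f v) \<or> dominates (f v) (f u)"
        using ws[rule_format, OF fP[OF uv(1)] fP[OF uv(2)] fne] .
      show ?thesis using e1 e2 by blast
    qed
  qed
  then have "graph_iso P (sg_adj W) S (sg_adj {w})" unfolding graph_iso_def using S(3) by blast
  then show "\<exists>P' W' :: point set. finite P' \<and> finite W' \<and> general_pos (P' \<union> W') \<and> card W' \<le> 1 \<and>
          graph_iso P (sg_adj W) P' (sg_adj W')"
    using S(1) w by (intro exI[of _ S] exI[of _ "{w}"]) simp
qed

end
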